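(* Let $d\in\mathbb{N}$, let $x_1^*$ denote the smallest zero of the Legendre polynomial $P_{d+1}(x)$, and define $z^*=\arccos|x_1^*|$. If $z>z^*$, then there exists no design on the rectangle $[z,\pi-z]\times(-\pi,\pi]$ whose information matrix in the spherical harmonic regression model of degree $d$ equals $I_{(d+1)^2}$.
   Context: Spherical harmonic functions: for $n\in\mathbb{N}_0$, $Y_n^0(\theta,\phi)=\sqrt{2n+1}\,P_n(\cos\theta)$ with $P_n$ the $n$-th Legendre polynomial (orthogonal w.r.t. Lebesgue measure on $[-1,1]$, $P_n(1)=1$); for $1\le m\le n$, $Y_n^m(\theta,\phi)=\sqrt{2(2n+1)\frac{(n-m)!}{(n+m)!}}\,P_n^m(\cos\theta)\cos(m\phi)$ and $Y_n^{-m}(\theta,\phi)=\sqrt{2(2n+1)\frac{(n-m)!}{(n+m)!}}\,P_n^m(\cos\theta)\sin(m\phi)$, where $P_n^m(x)=(-1)^m(1-x^2)^{m/2}\frac{d^m}{dx^m}P_n(x)$. The spherical harmonic regression model of degree $d$ has regression vector $f_d=(Y_0^0,Y_1^{-1},Y_1^0,Y_1^1,\dots,Y_d^{-d},\dots,Y_d^d)^T\in\mathbb{R}^{(d+1)^2}$. A design is a probability measure $\xi$ on $[0,\pi]\times(-\pi,\pi]$ (a design on a subset means one supported in that subset), with information matrix $M(\xi)=\int f_df_d^T\,d\xi$. *)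

theory Defs
  imports "HOL-Analysis.Analysis" "HOL-Probability.Probability"
          "HOL-Computational_Algebra.Polynomial"
begin

definition legendre :: "nat \<Rightarrow> real poly" where
  "legendre n = smult (1 / (2 ^ n * fact n)) ((pderiv ^^ n) ([:-1, 0, 1:] ^ n))"

definition assoc_legendre :: "nat \<Rightarrow> nat \<Rightarrow> real \<Rightarrow> real" where
  "assoc_legendre n m x =
     (-1) ^ m * sqrt (1 - x\<^sup>2) ^ m * poly ((pderiv ^^ m) (legendre n)) x"

definition sph_harm :: "nat \<Rightarrow> int \<Rightarrow> real \<times> real \<Rightarrow> real" where
  "sph_harm n m p = (let \<theta> = fst p; \<phi> = snd p; k = nat \<bar>m\<bar> in
     if m = 0 then sqrt (2 * real n + 1) * poly (legendre n) (cos \<theta>)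
     else sqrt (2 * (2 * real n + 1) * fact (n - k) / fact (n + k))
          * assoc_legendre n k (cos \<theta>)
          * (if m > 0 then cos (real k * \<phi>) else sin (real k * \<phi>)))"

definition sh_index :: "nat \<Rightarrow> (nat \<times> int) set" where
  "sh_index d = {(n, m). n \<le> d \<and> \<bar>m\<bar> \<le> int n}"

definition info_matrix :: "(real \<times> real) measure \<Rightarrow> nat \<times> int \<Rightarrow> nat \<times> int \<Rightarrow> real" where
  "info_matrix \<xi> i j = (\<integral>p. sph_harm (fst i) (snd i) p * sph_harm (fst j) (snd j) p \<partial>\<xi>)"

definition design_on :: "(real \<times> real) set \<Rightarrow> (real \<times> real) measure \<Rightarrow> bool" where
  "design_on R \<xi> \<longleftrightarrow> prob_space \<xi> \<and> sets \<xi> = sets borel \<and> emeasure \<xi> (UNIV - R) = 0"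

definition smallest_zero :: "real poly \<Rightarrow> real" where
  "smallest_zero p = Min {x. poly p x = 0}"

end

theory Submission
  imports Defs
begin


definition pint :: "real poly \<Rightarrow> real" where
  "pint p = integral {-1..1} (\<lambda>x. poly p x)"

lemma poly_cont: "continuous_on A (poly (p::real poly))"
  using continuous_on_poly[OF continuous_on_id, of A p] by (simp add: id_def)

lemma poly_integrable: "(\<lambda>x. poly (p::real poly) x) integrable_on {a..b}"
  by (intro integrable_continuous_interval poly_cont)

lemma poly_fun_add: "poly (p + (q::real poly)) = (\<lambda>x. poly p x + poly q x)" by (auto simp: fun_eq_iff)
lemma poly_fun_diff: "poly (p - (q::real poly)) = (\<lambda>x. poly p x - poly q x)" by (auto simp: fun_eq_iff)
lemma poly_fun_smult: "poly (smult a (q::real poly)) = (\<lambda>x. a * poly q x)" by (auto simp: fun_eq_iff)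
lemma poly_fun_0: "poly 0 = (\<lambda>x. 0)" by (auto simp: fun_eq_iff)


lemma pint_add: "pint (p + q) = pint p + pint q"
  unfolding pint_def by (simp only: poly_fun_add integral_add poly_integrable)

lemma pint_smult: "pint (smult a p) = a * pint p"
  unfolding pint_def by (simp only: poly_fun_smult integral_mult_right)

lemma pint_diff: "pint (p - q) = pint p - pint q"
  unfolding pint_def by (simp only: poly_fun_diff integral_diff poly_integrable)

lemma pint_0: "pint 0 = 0"
  unfolding pint_def by (simp only: poly_fun_0 integral_0)

lemma pint_pderiv: "pint (pderiv h) = poly h 1 - poly h (-1)"
proof -
  have "((\<lambda>x. poly (pderiv h) x) has_integral poly h 1 - poly h (-1)) {-1..1}"
    by (rule fundamental_theorem_of_calculus)
       (auto simp: has_real_derivative_iff_has_vector_derivative[symmetric]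
             intro: DERIV_subset[OF poly_DERIV])
  then show ?thesis unfolding pint_def by (simp add: integral_unique)
qed

lemma pint_ibp: "pint (pderiv f * g) = poly f 1 * poly g 1 - poly f (-1) * poly g (-1) - pint (f * pderiv g)"
proof -
  have "pint (pderiv (f * g)) = pint (pderiv f * g) + pint (f * pderiv g)"
    by (simp add: pderiv_mult pint_add algebra_simps)
  then show ?thesis using pint_pderiv[of "f * g"] by simp
qed

lemma infinite_Icc_m11: "infinite {-1..1::real}"
  using infinite_Icc[of "-1::real" 1] by simp

lemma poly_zero_on_Icc: assumes "\<forall>x\<in>{-1..1::real}. poly p x = 0" shows "p = 0"
proof (rule ccontr)
  assume "p \<noteq> 0"
  then have "finite {x. poly p x = 0}" by (rule poly_roots_finite)
  moreover have "{-1..1} \<subseteq> {x. poly p x = 0}" using assms by auto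
  ultimately show False using infinite_Icc_m11 finite_subset by blast
qed

lemma pint_nonneg_zero:
  assumes "\<forall>x\<in>{-1..1}. 0 \<le> poly p x" "pint p = 0" shows "p = 0"
proof -
  have "\<forall>x\<in>{-1..1::real}. poly p x = 0"
    using integral_eq_0_iff[of "-1" 1 "\<lambda>x. poly p x"] assms unfolding pint_def
    by (auto intro: poly_cont)
  then show ?thesis by (rule poly_zero_on_Icc)
qed

lemma pint_nonneg_pos:
  assumes "\<forall>x\<in>{-1..1}. 0 \<le> poly p x" "p \<noteq> 0" shows "pint p > 0"
proof -
  have "pint p \<ge> 0" unfolding pint_def
    using assms(1) by (intro integral_nonneg poly_integrable) auto
  then show ?thesis using pint_nonneg_zero[OF assms(1)] assms(2) by force
qed



definition wp :: "nat \<Rightarrow> real poly" where "wp n = [:-1,0,1:] ^ n"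

lemma legendre_wp: "legendre n = smult (1 / (2 ^ n * fact n)) ((pderiv ^^ n) (wp n))"
  unfolding legendre_def wp_def by simp

lemma dvd_pderiv_pow:
  fixes a :: real
  assumes "[:a,1:] ^ Suc m dvd p" shows "[:a,1:] ^ m dvd pderiv p"
proof -
  obtain g where g: "p = [:a,1:] ^ Suc m * g" using assms by (auto elim: dvdE)
  have "pderiv p = pderiv ([:a,1:] ^ Suc m) * g + [:a,1:] ^ Suc m * pderiv g"
    unfolding g pderiv_mult by (simp only: add.commute mult.commute)
  also have "\<dots> = smult (of_nat (Suc m)) ([:a,1:] ^ m) * pderiv [:a,1:] * g + [:a,1:] ^ Suc m * pderiv g"
    by (simp only: pderiv_power_Suc)
  finally have e: "pderiv p = smult (of_nat (Suc m)) ([:a,1:] ^ m) * pderiv [:a,1:] * g + [:a,1:] ^ m * ([:a,1:] * pderiv g)"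
    by (simp only: power_Suc2 mult.assoc)
  have "[:a,1:] ^ m dvd smult (of_nat (Suc m)) ([:a,1:] ^ m) * pderiv [:a,1:] * g"
    by (intro dvd_mult2 dvd_smult dvd_refl)
  then show ?thesis unfolding e by (intro dvd_add) auto
qed

lemma dvd_higher_pderiv:
  fixes a :: real
  assumes "[:a,1:] ^ m dvd p" "k \<le> m" shows "[:a,1:] ^ (m - k) dvd (pderiv ^^ k) p"
  using assms(2)
proof (induction k)
  case 0 then show ?case using assms(1) by simp
next
  case (Suc k)
  then have "[:a,1:] ^ Suc (m - Suc k) dvd (pderiv ^^ k) p"
    by (metis Suc_diff_Suc Suc_le_lessD less_imp_le_nat)
  then show ?case using dvd_pderiv_pow by simp
qed

lemma wp_factor: "wp n = [:-1,1:] ^ n * [:1,1:] ^ n"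
  unfolding wp_def by (simp add: power_mult_distrib[symmetric])

lemma wp_vanish:
  assumes "k < n" shows "poly ((pderiv ^^ k) (wp n)) 1 = 0" "poly ((pderiv ^^ k) (wp n)) (-1) = 0"
proof -
  have "[:-1,1:] ^ (n - k) dvd (pderiv ^^ k) (wp n)"
    using dvd_higher_pderiv[of "-1" n "wp n" k] assms wp_factor by simp
  then obtain g where "(pderiv ^^ k) (wp n) = [:-1,1:] ^ (n - k) * g" by (auto elim: dvdE)
  then show "poly ((pderiv ^^ k) (wp n)) 1 = 0" using assms by simp
  have "[:1,1:] ^ (n - k) dvd (pderiv ^^ k) (wp n)"
    using dvd_higher_pderiv[of "1" n "wp n" k] assms wp_factor by simp
  then obtain h where "(pderiv ^^ k) (wp n) = [:1,1:] ^ (n - k) * h" by (auto elim: dvdE)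
  then show "poly ((pderiv ^^ k) (wp n)) (-1) = 0" using assms by simp
qed

lemma ibp_gen:
  assumes "j \<le> n"
  shows "pint ((pderiv ^^ n) (wp n) * h) = (-1) ^ j * pint ((pderiv ^^ (n - j)) (wp n) * (pderiv ^^ j) h)"
  using assms
proof (induction j)
  case 0 then show ?case by simp
next
  case (Suc j)
  define F where "F = (pderiv ^^ (n - Suc j)) (wp n)"
  have F: "(pderiv ^^ (n - j)) (wp n) = pderiv F"
    unfolding F_def using Suc.prems by (metis Suc_diff_Suc Suc_le_lessD funpow.simps(2) o_apply)
  have v: "poly F 1 = 0" "poly F (-1) = 0" unfolding F_def using wp_vanish Suc.prems by auto
  have "pint ((pderiv ^^ n) (wp n) * h) = (-1) ^ j * pint (pderiv F * (pderiv ^^ j) h)"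
    using Suc F by simp
  also have "\<dots> = (-1) ^ Suc j * pint (F * (pderiv ^^ Suc j) h)"
    using pint_ibp[of F "(pderiv ^^ j) h"] v by simp
  finally show ?case unfolding F_def .
qed

lemma higher_pderiv_small: "degree g < k \<Longrightarrow> (pderiv ^^ k) (g::real poly) = 0"
  by (rule poly_eqI) (simp add: coeff_higher_pderiv coeff_eq_0)

lemma wp_ortho: "degree g < n \<Longrightarrow> pint ((pderiv ^^ n) (wp n) * g) = 0"
  using ibp_gen[of n n g] higher_pderiv_small[of g n] by (simp add: pint_0)

lemma legendre_ortho: "degree g < n \<Longrightarrow> pint (legendre n * g) = 0"
  unfolding legendre_wp using wp_ortho[of g n] by (simp add: pint_smult)

lemma degree_wp: "degree (wp n) = 2 * n"
proof -
  have d: "degree [:-1,0,1::real:] = 2" by simp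
  have "[:-1,0,1::real:] \<noteq> 0" by simp
  then show ?thesis unfolding wp_def using d degree_power_eq by (metis mult.commute)
qed

lemma lead_wp: "coeff (wp n) (2 * n) = 1"
proof -
  have l: "lead_coeff [:-1,0,1::real:] = 1" by simp
  have "lead_coeff (wp n) = 1" unfolding wp_def lead_coeff_power l by simp
  then show ?thesis using degree_wp by simp
qed

lemma degree_higher_pderiv_le: "degree ((pderiv ^^ k) (p::real poly)) \<le> degree p - k"
  by (rule degree_le) (simp add: coeff_higher_pderiv coeff_eq_0)

lemma legendre_coeff: "coeff (legendre n) n \<noteq> 0"
proof -
  have "coeff ((pderiv ^^ n) (wp n)) n = pochhammer (real (Suc n)) n"
    by (simp add: coeff_higher_pderiv lead_wp mult_2[symmetric] add.commute)
  moreover have "pochhammer (real (Suc n)) n > 0" by (intro pochhammer_pos) simp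
  ultimately show ?thesis unfolding legendre_wp by simp
qed

lemma degree_legendre: "degree (legendre n) = n"
proof -
  have "degree (legendre n) \<le> n" unfolding legendre_wp
    using degree_higher_pderiv_le[of n "wp n"] degree_wp[of n] by simp
  then show ?thesis using legendre_coeff le_degree by (metis le_antisym)
qed

lemma legendre_nz: "legendre n \<noteq> 0"
  using legendre_coeff[of n] by (metis coeff_0)

lemma pderiv_neg_comp:
  "(pderiv ^^ k) (p \<circ>\<^sub>p [:0,-1:]) = smult ((-1) ^ k) ((pderiv ^^ k) p \<circ>\<^sub>p [:0,-1::real:])"
proof (induction k)
  case 0 then show ?case by simp
next
  case (Suc k)
  have "(pderiv ^^ Suc k) (p \<circ>\<^sub>p [:0,-1:]) = pderiv (smult ((-1) ^ k) ((pderiv ^^ k) p \<circ>\<^sub>p [:0,-1::real:]))"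
    using Suc by simp
  also have "\<dots> = smult ((-1) ^ k) (((pderiv ^^ Suc k) p \<circ>\<^sub>p [:0,-1::real:]) * [:-1:])"
    by (simp add: pderiv_smult pderiv_pcompose pderiv_pCons)
  also have "\<dots> = smult ((-1) ^ Suc k) ((pderiv ^^ Suc k) p \<circ>\<^sub>p [:0,-1::real:])"
    by (simp add: poly_eq_iff)
  finally show ?case .
qed

lemma wp_neg: "wp n \<circ>\<^sub>p [:0,-1:] = wp n"
  by (rule poly_eq_poly_eq_iff[THEN iffD1]) (simp add: fun_eq_iff poly_pcompose wp_def)

lemma legendre_parity: "poly (legendre n) (-x) = (-1) ^ n * poly (legendre n) x"
proof -
  have "poly ((pderiv ^^ n) (wp n)) (-x) = poly ((pderiv ^^ n) (wp n) \<circ>\<^sub>p [:0,-1:]) x"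
    by (simp add: poly_pcompose)
  also have "\<dots> = (-1) ^ n * poly ((pderiv ^^ n) (wp n)) x"
  proof -
    have "(pderiv ^^ n) (wp n) = smult ((-1) ^ n) ((pderiv ^^ n) (wp n) \<circ>\<^sub>p [:0,-1::real:])"
      using pderiv_neg_comp[of n "wp n"] wp_neg by simp
    then have "poly ((pderiv ^^ n) (wp n)) x = (-1) ^ n * poly ((pderiv ^^ n) (wp n) \<circ>\<^sub>p [:0,-1::real:]) x"
      by (metis poly_smult)
    then show ?thesis by (simp add: power_mult_distrib[symmetric])
  qed
  finally show ?thesis unfolding legendre_wp by simp
qed



definition vp :: "real poly" where "vp = [:1,0,-1:]"
definition J :: "nat \<Rightarrow> real" where "J n = pint (vp ^ n)"

lemma J0: "J 0 = 2"
proof -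
  have "poly (1::real poly) = (\<lambda>x. 1)" by auto
  then show ?thesis unfolding J_def pint_def by simp
qed

lemma J_rec: "(2 * real n + 3) * J (Suc n) = 2 * (real n + 1) * J n"
proof -
  have pd: "pderiv vp = [:0,-2:]" unfolding vp_def by (simp add: pderiv_pCons)
  have e1: "pderiv [:0,1::real:] * vp ^ Suc n = vp ^ Suc n" by (simp add: pderiv_pCons)
  have e2: "[:0,1:] * pderiv (vp ^ Suc n) = smult (2 * (real n + 1)) (vp ^ Suc n - vp ^ n)"
  proof -
    have "pderiv (vp ^ Suc n) = smult (of_nat (Suc n)) (vp ^ n) * [:0,-2:]"
      by (simp only: pderiv_power_Suc pd)
    then show ?thesis
      by (intro poly_eq_poly_eq_iff[THEN iffD1]) (simp add: fun_eq_iff vp_def algebra_simps)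
  qed
  have v1: "poly vp 1 = 0" "poly vp (-1) = 0" unfolding vp_def by simp_all
  have "J (Suc n) = - pint (smult (2 * (real n + 1)) (vp ^ Suc n - vp ^ n))"
    using pint_ibp[of "[:0,1:]" "vp ^ Suc n"] unfolding e1 e2 J_def using v1 by simp
  moreover have "pint (smult (2 * (real n + 1)) (vp ^ Suc n - vp ^ n)) = (2 * (real n + 1)) * (J (Suc n) - J n)"
    unfolding J_def by (simp only: pint_smult pint_diff)
  ultimately have "J (Suc n) = - ((2 * (real n + 1)) * (J (Suc n) - J n))" by metis
  then show ?thesis by (simp add: algebra_simps)
qed

lemma J_closed0: "fact (2 * n) * J n * (2 * real n + 1) = 2 * (2 ^ n * fact n) ^ 2"
proof (induction n)
  case 0 then show ?case by (simp add: J0)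
next
  case (Suc n)
  have f: "fact (2 * Suc n) = (2 * real n + 2) * (2 * real n + 1) * (fact (2 * n) :: real)"
    by (simp add: algebra_simps)
  have "fact (2 * Suc n) * J (Suc n) * (2 * real (Suc n) + 1)
      = (2 * real n + 2) * (2 * real n + 1) * fact (2 * n) * ((2 * real n + 3) * J (Suc n))"
    unfolding f by (simp add: algebra_simps)
  also have "\<dots> = (2 * real n + 2) * (2 * real n + 1) * fact (2 * n) * (2 * (real n + 1) * J n)"
    by (simp only: J_rec)
  also have "\<dots> = 4 * (real n + 1) ^ 2 * (fact (2 * n) * J n * (2 * real n + 1))"
    by (simp add: algebra_simps power2_eq_square)
  also have "\<dots> = 2 * (2 ^ Suc n * fact (Suc n)) ^ 2"
    unfolding Suc.IH by (simp add: algebra_simps power2_eq_square)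
  finally show ?case .
qed

lemma J_closed: "(1 / (2 ^ n * fact n)) ^ 2 * fact (2 * n) * J n = 2 / (2 * real n + 1)"
proof -
  have pos: "(2 ^ n * fact n :: real) > 0" by auto
  have "2 * real n + 1 > 0" by simp
  then show ?thesis using J_closed0[of n] pos by (simp add: field_simps)
qed

lemma D2n: "(pderiv ^^ n) ((pderiv ^^ n) (wp n)) = [:fact (2 * n):]"
proof -
  have "(pderiv ^^ n) ((pderiv ^^ n) (wp n)) = (pderiv ^^ (2 * n)) (wp n)"
    by (simp only: mult_2 funpow_add o_apply)
  also have "\<dots> = [:fact (2 * n):]"
  proof (rule poly_eqI)
    fix i
    show "coeff ((pderiv ^^ (2 * n)) (wp n)) i = coeff [:fact (2 * n):] i"
    proof (cases i)
      case 0 then show ?thesis by (simp add: coeff_higher_pderiv lead_wp pochhammer_fact)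
    next
      case (Suc j)
      then have "coeff (wp n) (i + 2 * n) = 0" using degree_wp by (intro coeff_eq_0) simp
      then show ?thesis using Suc by (simp add: coeff_higher_pderiv)
    qed
  qed
  finally show ?thesis .
qed

lemma wp_vp: "wp n = smult ((-1) ^ n) (vp ^ n)"
  by (intro poly_eq_poly_eq_iff[THEN iffD1])
     (simp add: fun_eq_iff vp_def wp_def power_mult_distrib[symmetric])

lemma legendre_norm: "pint (legendre n * legendre n) = 2 / (2 * real n + 1)"
proof -
  define A where "A = (pderiv ^^ n) (wp n)"
  have "pint (A * A) = (-1) ^ n * pint (wp n * [:fact (2 * n):])"
    using ibp_gen[of n n A] D2n unfolding A_def by simp
  also have "\<dots> = (-1) ^ n * fact (2 * n) * pint (wp n)"
    by (simp add: pint_smult mult.commute)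
  also have "\<dots> = fact (2 * n) * J n"
    unfolding wp_vp J_def pint_smult by (simp add: power_mult_distrib[symmetric])
  finally have "pint (A * A) = fact (2 * n) * J n" .
  then have "pint (legendre n * legendre n) = (1 / (2 ^ n * fact n)) ^ 2 * (fact (2 * n) * J n)"
    unfolding legendre_wp A_def[symmetric] by (simp add: pint_smult power2_eq_square)
  then show ?thesis using J_closed[of n] by simp
qed



lemma deg_drop: "degree (p::real poly) \<le> m \<Longrightarrow> coeff p m = 0 \<Longrightarrow> p = 0 \<or> degree p < m"
  by (metis leading_coeff_0_iff le_neq_implies_less)

lemma legendre_span:
  assumes "\<forall>k\<le>d. Q (legendre k)" "Q 0" "\<And>a p q. Q p \<Longrightarrow> Q q \<Longrightarrow> Q (smult a p + q)"
    "degree f \<le> d"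
  shows "Q f"
  using assms(1,4)
proof (induction d arbitrary: f)
  case 0
  define \<alpha> where "\<alpha> = coeff f 0 / coeff (legendre 0) 0"
  define f' where "f' = f - smult \<alpha> (legendre 0)"
  have "degree f' \<le> 0" unfolding f'_def using 0 degree_legendre[of 0]
    by (intro degree_diff_le) auto
  moreover have "coeff f' 0 = 0" unfolding f'_def \<alpha>_def using legendre_coeff[of 0] by simp
  ultimately have "f' = 0" using deg_drop by blast
  moreover have "f = smult \<alpha> (legendre 0) + f'" unfolding f'_def by simp
  moreover have "Q (smult \<alpha> (legendre 0) + 0)" using 0 assms(2) by (intro assms(3)) auto
  ultimately show ?case by simp
next
  case (Suc m)
  define \<alpha> where "\<alpha> = coeff f (Suc m) / coeff (legendre (Suc m)) (Suc m)"
  define f' where "f' = f - smult \<alpha> (legendre (Suc m))"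
  have "degree f' \<le> Suc m" unfolding f'_def using Suc.prems degree_legendre[of "Suc m"]
    by (intro degree_diff_le) auto
  moreover have "coeff f' (Suc m) = 0" unfolding f'_def \<alpha>_def using legendre_coeff[of "Suc m"] by simp
  ultimately have "f' = 0 \<or> degree f' < Suc m" using deg_drop by blast
  then have "degree f' \<le> m" by auto
  then have "Q f'" using Suc by simp
  moreover have "f = smult \<alpha> (legendre (Suc m)) + f'" unfolding f'_def by simp
  ultimately show ?case using Suc.prems assms(3) by auto
qed

lemma pint_sq_pos: "r \<noteq> 0 \<Longrightarrow> pint (r * r) > 0"
  by (intro pint_nonneg_pos) auto

lemma legendre_roots_ge:
  assumes "n \<ge> 1" "poly (legendre n) s = 0" shows "s \<ge> -1"
proof (rule ccontr)
  assume "\<not> s \<ge> -1"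
  then have s: "s < -1" by simp
  obtain g where g: "legendre n = [:-s,1:] * g" using assms(2) poly_eq_0_iff_dvd by (metis dvdE)
  have "g \<noteq> 0" using g legendre_nz by auto
  then have "degree (legendre n) = 1 + degree g" unfolding g by (subst degree_mult_eq) auto
  then have "degree g < n" using degree_legendre[of n] by simp
  then have z: "pint ([:-s,1:] * g * g) = 0" using legendre_ortho[of g n] g by simp
  have "\<forall>x\<in>{-1..1}. 0 \<le> poly ([:-s,1:] * g * g) x"
  proof
    fix x :: real assume "x \<in> {-1..1}"
    then have "0 \<le> (x - s) * (poly g x)\<^sup>2" using s by (intro mult_nonneg_nonneg) auto
    then show "0 \<le> poly ([:-s,1:] * g * g) x" by (simp add: algebra_simps power2_eq_square)
  qed
  from pint_nonneg_zero[OF this z] have "[:-s,1:] * g * g = 0" .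
  moreover have "[:-s,1:] \<noteq> 0" by simp
  ultimately show False using \<open>g \<noteq> 0\<close> by (metis mult_eq_0_iff)
qed

lemma pint_nonvanishing:
  assumes "\<forall>x\<in>{-1..1}. poly p x \<noteq> 0" "pint p = 0" shows False
proof (cases "poly p (-1) > 0")
  case True
  have "\<forall>x\<in>{-1..1}. 0 \<le> poly p x"
  proof
    fix x :: real assume x: "x \<in> {-1..1}"
    show "0 \<le> poly p x"
    proof (rule ccontr)
      assume "\<not> 0 \<le> poly p x"
      then have "x \<noteq> -1" "poly p x < 0" using True by auto
      then obtain y where "-1 < y" "y < x" "poly p y = 0" using poly_IVT_neg[of "-1" x p] True x by auto
      then show False using assms(1) x by auto
    qed
  qed
  then have "p = 0" using pint_nonneg_zero assms(2) by blast
  then show False using assms(1) by auto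
next
  case False
  then have F: "poly (-p) (-1) > 0" using assms(1) by (simp add: less_le)
  have "\<forall>x\<in>{-1..1}. 0 \<le> poly (-p) x"
  proof
    fix x :: real assume x: "x \<in> {-1..1}"
    show "0 \<le> poly (-p) x"
    proof (rule ccontr)
      assume "\<not> 0 \<le> poly (-p) x"
      then have "x \<noteq> -1" "poly (-p) x < 0" using F by auto
      then obtain y where "-1 < y" "y < x" "poly (-p) y = 0" using poly_IVT_neg[of "-1" x "-p"] F x by auto
      then show False using assms(1) x by auto
    qed
  qed
  moreover have "pint (-p) = 0" using assms(2) pint_smult[of "-1" p] by simp
  ultimately have "-p = 0" using pint_nonneg_zero by blast
  then show False using assms(1) by auto
qed

lemma legendre_has_root: assumes "n \<ge> 1" shows "\<exists>x. poly (legendre n) x = 0"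
proof (rule ccontr)
  assume "\<not> ?thesis"
  then have "\<forall>x\<in>{-1..1}. poly (legendre n) x \<noteq> 0" by auto
  moreover have "pint (legendre n) = 0" using legendre_ortho[of 1 n] assms by simp
  ultimately show False by (rule pint_nonvanishing)
qed



definition Lm :: "(real \<times> real) measure \<Rightarrow> real poly \<Rightarrow> real poly \<Rightarrow> real" where
  "Lm M f g = (\<integral>\<omega>. poly f (cos (fst \<omega>)) * poly g (cos (fst \<omega>)) \<partial>M)"

lemma poly_bounded_Icc: "\<exists>B. \<forall>x\<in>{-1..1::real}. \<bar>poly (p::real poly) x\<bar> \<le> B"
proof -
  have "compact (poly p ` {-1..1::real})"
    by (intro compact_continuous_image poly_cont) auto
  then obtain B where "\<forall>y\<in>poly p ` {-1..1}. norm y \<le> B"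
    using compact_imp_bounded bounded_iff by metis
  then show ?thesis by auto
qed

lemma cont_cosfst: "continuous_on UNIV (\<lambda>x::real\<times>real. cos (fst x))"
  by (intro continuous_at_imp_continuous_on ballI continuous_intros)

lemma integrable_polycos:
  fixes p :: "real poly" and M :: "(real \<times> real) measure"
  assumes "prob_space M" "sets M = sets borel"
  shows "integrable M (\<lambda>\<omega>. poly p (cos (fst \<omega>)))"
proof -
  interpret prob_space M by fact
  obtain B where B: "\<forall>x\<in>{-1..1::real}. \<bar>poly p x\<bar> \<le> B" using poly_bounded_Icc by blast
  have m: "(\<lambda>\<omega>::real\<times>real. poly p (cos (fst \<omega>))) \<in> borel_measurable borel"
    by (intro borel_measurable_continuous_onI continuous_on_poly cont_cosfst)
  show ?thesis
  proof (rule integrable_const_bound[where B=B])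
    show "AE x in M. norm (poly p (cos (fst x))) \<le> B" using B by auto
    show "(\<lambda>\<omega>. poly p (cos (fst \<omega>))) \<in> borel_measurable M"
      by (subst measurable_cong_sets[OF assms(2) refl]) (rule m)
  qed
qed

lemma integrable_Lm:
  fixes f g :: "real poly" and M :: "(real \<times> real) measure"
  assumes "prob_space M" "sets M = sets borel"
  shows "integrable M (\<lambda>\<omega>. poly f (cos (fst \<omega>)) * poly g (cos (fst \<omega>)))"
  using integrable_polycos[OF assms, of "f * g"] by simp

lemma Lm_lin:
  fixes p q g :: "real poly"
  assumes "prob_space M" "sets M = sets borel"
  shows "Lm M (smult a p + q) g = a * Lm M p g + Lm M q g"
proof -
  have "Lm M (smult a p + q) g =
     (\<integral>\<omega>. a * (poly p (cos (fst \<omega>)) * poly g (cos (fst \<omega>))) + poly q (cos (fst \<omega>)) * poly g (cos (fst \<omega>)) \<partial>M)"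
    unfolding Lm_def by (simp add: algebra_simps)
  also have "\<dots> = a * Lm M p g + Lm M q g"
  proof -
    have i1: "integrable M (\<lambda>\<omega>. a * (poly p (cos (fst \<omega>)) * poly g (cos (fst \<omega>))))"
      using integrable_Lm[OF assms] by (intro integrable_mult_right) auto
    have i2: "integrable M (\<lambda>\<omega>. poly q (cos (fst \<omega>)) * poly g (cos (fst \<omega>)))"
      using integrable_Lm[OF assms] by auto
    show ?thesis unfolding Lm_def by (simp add: Bochner_Integration.integral_add[OF i1 i2])
  qed
  finally show ?thesis .
qed

lemma Lm_sym: "Lm M f g = Lm M g f"
  unfolding Lm_def by (simp add: mult.commute)

lemma Lm_0: "Lm M 0 g = 0"
  unfolding Lm_def by simp

lemma sph_harm_zonal: "sph_harm k 0 \<omega> = sqrt (2 * real k + 1) * poly (legendre k) (cos (fst \<omega>))"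
  unfolding sph_harm_def by (simp add: Let_def)

lemma info_zonal:
  "info_matrix M (k, 0) (l, 0) = sqrt (2 * real k + 1) * sqrt (2 * real l + 1) * Lm M (legendre k) (legendre l)"
proof -
  have "(\<lambda>\<omega>. sph_harm k 0 \<omega> * sph_harm l 0 \<omega>) = (\<lambda>\<omega>. (sqrt (2 * real k + 1) * sqrt (2 * real l + 1)) *
     (poly (legendre k) (cos (fst \<omega>)) * poly (legendre l) (cos (fst \<omega>))))"
    unfolding sph_harm_zonal by (simp add: fun_eq_iff algebra_simps)
  then show ?thesis unfolding info_matrix_def Lm_def by simp
qed

lemma pint_legendre_pair:
  "pint (legendre k * legendre l) = (if k = l then 2 / (2 * real k + 1) else 0)"
proof (cases "k = l")
  case True then show ?thesis using legendre_norm by simp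
next
  case False
  then show ?thesis
  proof (cases "k < l")
    case True then show ?thesis using legendre_ortho[of "legendre k" l] degree_legendre
      by (simp add: mult.commute)
  next
    case False then show ?thesis using \<open>k \<noteq> l\<close> legendre_ortho[of "legendre l" k] degree_legendre
      by simp
  qed
qed

lemma Lm_pint:
  assumes "prob_space M" "sets M = sets borel"
    and info: "\<forall>k\<le>d. \<forall>l\<le>d. info_matrix M (k, 0) (l, 0) = (if k = l then 1 else 0)"
    and "degree f \<le> d" "degree g \<le> d"
  shows "Lm M f g = pint (f * g) / 2"
proof -
  have base: "Lm M (legendre k) (legendre l) = pint (legendre k * legendre l) / 2"
    if "k \<le> d" "l \<le> d" for k l
  proof -
    have pos: "sqrt (2 * real k + 1) > 0" "sqrt (2 * real l + 1) > 0" by auto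
    have "sqrt (2 * real k + 1) * sqrt (2 * real l + 1) * Lm M (legendre k) (legendre l)
       = (if k = l then 1 else 0)" using info that info_zonal by metis
    then show ?thesis unfolding pint_legendre_pair using pos
      by (cases "k = l") (auto simp: field_simps)
  qed
  have step1: "Lm M f' (legendre l) = pint (f' * legendre l) / 2" if "l \<le> d" "degree f' \<le> d" for l f'
  proof (rule legendre_span[where Q = "\<lambda>f. Lm M f (legendre l) = pint (f * legendre l) / 2"])
    show "\<forall>k\<le>d. Lm M (legendre k) (legendre l) = pint (legendre k * legendre l) / 2"
      using base that by auto
    show "Lm M 0 (legendre l) = pint (0 * legendre l) / 2" by (simp add: Lm_0 pint_0)
    show "Lm M (smult a p + q) (legendre l) = pint ((smult a p + q) * legendre l) / 2"
      if "Lm M p (legendre l) = pint (p * legendre l) / 2" "Lm M q (legendre l) = pint (q * legendre l) / 2"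
      for a p q
      using that Lm_lin[OF assms(1,2)] by (simp add: ring_distribs pint_add pint_smult)
    show "degree f' \<le> d" by fact
  qed
  show ?thesis
  proof (rule legendre_span[where Q = "\<lambda>g. Lm M f g = pint (f * g) / 2"])
    show "\<forall>k\<le>d. Lm M f (legendre k) = pint (f * legendre k) / 2"
      using step1 assms(4) by auto
    show "Lm M f 0 = pint (f * 0) / 2" by (simp add: Lm_sym[of M f] Lm_0 pint_0)
    show "Lm M f (smult a p + q) = pint (f * (smult a p + q)) / 2"
      if "Lm M f p = pint (f * p) / 2" "Lm M f q = pint (f * q) / 2" for a p q
      using that Lm_lin[OF assms(1,2)] Lm_sym[of M f]
      by (simp add: ring_distribs pint_add pint_smult)
    show "degree g \<le> d" by fact
  qed
qed



lemma t1: "([:0,1:] * r) * ([:0,1:] * r) - smult (a\<^sup>2) (r * r) = ([:c,1:] * ([:-c,1:] * r)) * r + smult (c\<^sup>2 - a\<^sup>2) (r * (r::real poly))"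
proof (intro poly_eq_poly_eq_iff[THEN iffD1] ext)
  fix x
  have "poly r x * poly r x * (x * x - a * a) = (c + x) * (x - c) * poly r x * poly r x + (c * c - a * a) * (poly r x * poly r x)"
    by algebra
  then show "poly (([:0,1:] * r) * ([:0,1:] * r) - smult (a\<^sup>2) (r * r)) x = poly (([:c,1:] * ([:-c,1:] * r)) * r + smult (c\<^sup>2 - a\<^sup>2) (r * r)) x"
    by (simp add: power2_eq_square algebra_simps)
qed

theorem theorem3p6:
  fixes d :: nat and z :: real
  assumes "d \<ge> 1"
    and "z > arccos \<bar>smallest_zero (legendre (d + 1))\<bar>"
  shows "\<not> (\<exists>\<xi>. design_on ({z..pi - z} \<times> {-pi<..pi}) \<xi> \<and>
              (\<forall>i\<in>sh_index d. \<forall>j\<in>sh_index d.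
                  info_matrix \<xi> i j = (if i = j then 1 else 0)))"
proof
  define R where "R = {z..pi - z} \<times> {-pi<..pi}"
  assume "\<exists>\<xi>. design_on ({z..pi - z} \<times> {-pi<..pi}) \<xi> \<and>
              (\<forall>i\<in>sh_index d. \<forall>j\<in>sh_index d.
                  info_matrix \<xi> i j = (if i = j then 1 else 0))"
  then obtain \<xi> where des: "design_on R \<xi>"
    and info0: "\<forall>i\<in>sh_index d. \<forall>j\<in>sh_index d. info_matrix \<xi> i j = (if i = j then 1 else 0)"
    unfolding R_def by blast
  have ps: "prob_space \<xi>" and sx: "sets \<xi> = sets borel" and nullR: "emeasure \<xi> (UNIV - R) = 0"
    using des unfolding design_on_def by auto
  interpret prob_space \<xi> by fact
  have space: "space \<xi> = UNIV" using sets_eq_imp_space_eq[OF sx] by simp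
  have info: "\<forall>k\<le>d. \<forall>l\<le>d. info_matrix \<xi> (k, 0) (l, 0) = (if k = l then 1 else 0)"
    using info0 unfolding sh_index_def by auto
  have Rmeas: "R \<in> sets \<xi>"
  proof -
    have "R \<in> sets (borel \<Otimes>\<^sub>M borel)" unfolding R_def by (intro pair_measureI) auto
    then show ?thesis unfolding sx borel_prod .
  qed
  have AER: "AE \<omega> in \<xi>. \<omega> \<in> R"
  proof (rule AE_I')
    show "UNIV - R \<in> null_sets \<xi>" using null_setsI[OF nullR] sets.compl_sets[OF Rmeas] space by simp
    show "{x \<in> space \<xi>. x \<notin> R} \<subseteq> UNIV - R" by auto
  qed
  define P where "P = legendre (Suc d)"
  define S where "S = {x. poly P x = 0}"
  have finS: "finite S" unfolding S_def P_def by (rule poly_roots_finite[OF legendre_nz])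
  have neS: "S \<noteq> {}" unfolding S_def P_def using legendre_has_root[of "Suc d"] by auto
  define s where "s = smallest_zero P"
  have sS: "s \<in> S" unfolding s_def smallest_zero_def S_def[symmetric] using finS neS by simp
  have smin: "\<forall>x\<in>S. s \<le> x" unfolding s_def smallest_zero_def S_def[symmetric] using finS neS by simp
  have s_ge: "s \<ge> -1" using sS legendre_roots_ge[of "Suc d" s] unfolding S_def P_def by simp
  have negS: "-s \<in> S" using sS legendre_parity[of "Suc d" s] unfolding S_def P_def by simp
  then have s_le: "s \<le> 0" using smin by force
  have zs: "z > arccos \<bar>s\<bar>" using assms(2) unfolding s_def P_def by simp
  show False
  proof (cases "s = 0")
    case True
    then have "z > pi / 2" using zs by simp
    then have "R = {}" unfolding R_def by auto
    then show False using nullR emeasure_space_1 space by simp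
  next
    case False
    define c where "c = - s"
    have c: "0 < c" "c \<le> 1" using False s_le s_ge unfolding c_def by auto
    have zc: "z > arccos c" using zs c unfolding c_def by simp
    define a where "a = (if z \<le> pi / 2 then cos z else 0)"
    have a0: "0 \<le> a"
    proof (cases "z \<le> pi / 2")
      case True
      have "0 \<le> z" using zc arccos_lbound[of c] c by simp
      then show ?thesis unfolding a_def using True by (simp add: cos_ge_zero)
    qed (simp add: a_def)
    have ac: "a < c"
    proof (cases "z \<le> pi / 2")
      case True
      have "cos z < cos (arccos c)"
        using zc True arccos_lbound[of c] c by (intro cos_monotone_0_pi) auto
      then show ?thesis unfolding a_def using True c by simp
    next
      case False then show ?thesis unfolding a_def using c by simp
    qed
    have cosR: "(cos (fst \<omega>))\<^sup>2 \<le> a\<^sup>2" if "\<omega> \<in> R" for \<omega>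
    proof -
      have th: "z \<le> fst \<omega>" "fst \<omega> \<le> pi - z" using that unfolding R_def by auto
      then have zle: "z \<le> pi / 2" by simp
      have z0: "0 \<le> z" using zc arccos_lbound[of c] c by simp
      have "cos (fst \<omega>) \<le> cos z" using th z0 zle by (intro cos_monotone_0_pi_le) auto
      moreover have "cos (pi - z) \<le> cos (fst \<omega>)" using th z0 zle by (intro cos_monotone_0_pi_le) auto
      ultimately have "\<bar>cos (fst \<omega>)\<bar> \<le> \<bar>a\<bar>" unfolding a_def using zle a0 unfolding a_def by auto
      then show ?thesis by (simp add: abs_le_square_iff)
    qed
    have "[:-s,1:] dvd P" using sS poly_eq_0_iff_dvd unfolding S_def by blast
    then obtain g where g0: "P = [:-s,1:] * g" by (rule dvdE)
    then have g: "P = [:c,1:] * g" by (simp add: c_def)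
    have "poly P c = 0" using negS unfolding S_def c_def by simp
    then have "poly g c = 0" using c unfolding g by simp
    then have "[:-c,1:] dvd g" using poly_eq_0_iff_dvd by blast
    then obtain r where r: "g = [:-c,1:] * r" by (rule dvdE)
    have Pr: "P = [:c,1:] * ([:-c,1:] * r)" using g r by simp
    have rnz: "r \<noteq> 0" using Pr legendre_nz unfolding P_def by auto
    have "[:-c,1:] \<noteq> 0" by simp
    then have nz2: "[:-c,1:] * r \<noteq> 0" using rnz by (rule no_zero_divisors)
    have d2: "degree ([:-c,1:] * r) = 1 + degree r" using rnz by (subst degree_mult_eq) auto
    have "degree P = 1 + (1 + degree r)" unfolding Pr using nz2 d2
      by (subst degree_mult_eq) auto
    then have dr: "degree r + 1 = d" using degree_legendre[of "Suc d"] unfolding P_def by simp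
    define xr where "xr = [:0,1:] * r"
    have dxr: "degree xr = d" unfolding xr_def using rnz dr by (subst degree_mult_eq) auto
    have L1: "Lm \<xi> xr xr = pint (xr * xr) / 2"
      using Lm_pint[OF ps sx info] dxr by simp
    have L2: "Lm \<xi> r r = pint (r * r) / 2"
      using Lm_pint[OF ps sx info] dr by simp
    have ident: "xr * xr - smult (a\<^sup>2) (r * r) = P * r + smult (c\<^sup>2 - a\<^sup>2) (r * r)"
      unfolding Pr xr_def
      unfolding Pr xr_def by (rule t1)
    have orth: "pint (P * r) = 0"
      using legendre_ortho[of r "Suc d"] dr unfolding P_def by simp
    have rpos: "pint (r * r) > 0" using pint_sq_pos[OF rnz] .
    have "pint (xr * xr) - a\<^sup>2 * pint (r * r) = (c\<^sup>2 - a\<^sup>2) * pint (r * r)"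
      using arg_cong[OF ident, of pint] orth by (simp add: pint_diff pint_add pint_smult)
    moreover have "c\<^sup>2 - a\<^sup>2 > 0" using ac a0 by (simp add: power_strict_mono)
    ultimately have pos: "Lm \<xi> xr xr - a\<^sup>2 * Lm \<xi> r r > 0"
      unfolding L1 L2 using rpos by (simp add: field_simps)
    define qf where "qf = (\<lambda>\<omega>::real\<times>real. a\<^sup>2 * (poly r (cos (fst \<omega>)) * poly r (cos (fst \<omega>)))
        - poly xr (cos (fst \<omega>)) * poly xr (cos (fst \<omega>)))"
    have i1: "integrable \<xi> (\<lambda>\<omega>. a\<^sup>2 * (poly r (cos (fst \<omega>)) * poly r (cos (fst \<omega>))))"
      using integrable_Lm[OF ps sx] by (intro integrable_mult_right) auto
    have i2: "integrable \<xi> (\<lambda>\<omega>. poly xr (cos (fst \<omega>)) * poly xr (cos (fst \<omega>)))"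
      using integrable_Lm[OF ps sx] by auto
    have "integral\<^sup>L \<xi> qf = a\<^sup>2 * Lm \<xi> r r - Lm \<xi> xr xr"
      unfolding qf_def Lm_def by (simp add: Bochner_Integration.integral_diff[OF i1 i2])
    moreover have "integral\<^sup>L \<xi> qf \<ge> 0"
    proof (rule integral_nonneg_AE)
      show "AE x in \<xi>. 0 \<le> qf x"
        using AER
      proof (rule AE_mp)
        show "AE x in \<xi>. x \<in> R \<longrightarrow> 0 \<le> qf x"
        proof (rule AE_I2, rule impI)
          fix \<omega> assume "\<omega> \<in> R"
          then have h: "(cos (fst \<omega>))\<^sup>2 \<le> a\<^sup>2" by (rule cosR)
          have "qf \<omega> = (a\<^sup>2 - (cos (fst \<omega>))\<^sup>2) * (poly r (cos (fst \<omega>)))\<^sup>2"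
            unfolding qf_def xr_def by (simp add: algebra_simps power2_eq_square)
          also have "\<dots> \<ge> 0" using h by (intro mult_nonneg_nonneg) auto
          finally show "0 \<le> qf \<omega>" .
        qed
      qed
    qed
    ultimately show False using pos by simp
  qed
qed

end
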